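(* Let $d = 10$. (i) If $n = (4(12m+9)+2) + 4(6k+3)\sqrt{10}$ with $m, k \in \mathbb{Z}$, $m \equiv 4 \pmod 5$ and $k \equiv 2 \pmod 5$, then there exist infinitely many $D(n)$-quadruples in $\mathbb{Z}[\sqrt{10}]$. (ii) If $n = (48m+2) + 24k\sqrt{10}$ with $m, k \in \mathbb{Z}$, $m \equiv 1 \pmod 5$ and $k \equiv 0 \pmod 5$, then there exist infinitely many $D(n)$-quadruples in $\mathbb{Z}[\sqrt{10}]$.
   Context: For $n \in \mathbb{Z}[\sqrt{d}]$, a set $\{a_1,a_2,a_3,a_4\}$ of four distinct non-zero elements of $\mathbb{Z}[\sqrt{d}]$ is called a $D(n)$-quadruple in $\mathbb{Z}[\sqrt{d}]$ if $a_ia_j + n$ is a square of an element of $\mathbb{Z}[\sqrt{d}]$ for all $1 \le i < j \le 4$. *)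

theory Defs
  imports Main
begin

text \<open>Elements of Z[sqrt d] are represented as pairs (a, b) of integers,
standing for a + b * sqrt d.  Here d is a fixed non-square integer (d = 10).\<close>

type_synonym zsqrt = "int \<times> int"

definition zs_add :: "zsqrt \<Rightarrow> zsqrt \<Rightarrow> zsqrt" where
  "zs_add x y = (fst x + fst y, snd x + snd y)"

definition zs_mult :: "int \<Rightarrow> zsqrt \<Rightarrow> zsqrt \<Rightarrow> zsqrt" where
  "zs_mult d x y = (fst x * fst y + d * snd x * snd y, fst x * snd y + snd x * fst y)"

definition zs_is_square :: "int \<Rightarrow> zsqrt \<Rightarrow> bool" where
  "zs_is_square d z \<longleftrightarrow> (\<exists>w. zs_mult d w w = z)"

definition is_Dn_quadruple :: "int \<Rightarrow> zsqrt \<Rightarrow> zsqrt set \<Rightarrow> bool" where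
  "is_Dn_quadruple d n S \<longleftrightarrow>
     card S = 4 \<and> (0, 0) \<notin> S \<and>
     (\<forall>a\<in>S. \<forall>b\<in>S. a \<noteq> b \<longrightarrow> zs_is_square d (zs_add (zs_mult d a b) n))"

end

theory Submission imports Defs Complex_Main begin

definition mu :: "zsqrt \<Rightarrow> zsqrt \<Rightarrow> zsqrt" where "mu = zs_mult 10"
definition ad :: "zsqrt \<Rightarrow> zsqrt \<Rightarrow> zsqrt" where "ad = zs_add"

definition qA where "qA K = ad (mu (3,0) K) (1,0)"
definition qB where "qB K = ad (mu (3,0) K) (2,0)"
definition qU where "qU K = ad (mu (2,0) K) (1,0)"
definition qa :: "zsqrt \<Rightarrow> zsqrt \<Rightarrow> zsqrt" where "qa K M = M"
definition qb where "qb K M = ad (mu M (mu (qA K) (qA K))) (mu (mu (2,0) K) (0,1))"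
definition qc where "qc K M = ad (mu M (mu (qB K) (qB K))) (mu (ad (mu (2,0) K) (2,0)) (0,1))"
definition qd where "qd K M = ad (mu (9,0) (mu M (mu (qU K) (qU K)))) (mu (ad (mu (8,0) K) (4,0)) (0,1))"
definition qn where "qn K M = ad (mu (0,1) (0,1)) (mu (2,0) (mu (qU K) (mu (0,1) M)))"

lemmas qdefs = mu_def ad_def zs_mult_def zs_add_def qA_def qB_def qU_def qa_def qb_def qc_def qd_def qn_def

lemma sq_ab: "mu (ad (mu M (qA K)) (0,1)) (ad (mu M (qA K)) (0,1)) = ad (mu (qa K M) (qb K M)) (qn K M)"
  by (cases K; cases M) (simp add: qdefs algebra_simps)
lemma sq_ac: "mu (ad (mu M (qB K)) (0,1)) (ad (mu M (qB K)) (0,1)) = ad (mu (qa K M) (qc K M)) (qn K M)"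
  by (cases K; cases M) (simp add: qdefs algebra_simps)
lemma sq_ad: "mu (ad (mu (3,0) (mu M (qU K))) (0,1)) (ad (mu (3,0) (mu M (qU K))) (0,1)) = ad (mu (qa K M) (qd K M)) (qn K M)"
  by (cases K; cases M) (simp add: qdefs algebra_simps)
lemma sq_bc: "mu (ad (mu M (mu (qA K) (qB K))) (mu (qU K) (0,1))) (ad (mu M (mu (qA K) (qB K))) (mu (qU K) (0,1))) = ad (mu (qb K M) (qc K M)) (qn K M)"
  by (cases K; cases M) (simp add: qdefs algebra_simps)
lemma sq_bd: "let r = ad (mu (3,0) (mu M (mu (qA K) (qU K)))) (mu (ad (mu (4,0) K) (1,0)) (0,1)) in mu r r = ad (mu (qb K M) (qd K M)) (qn K M)"
  by (cases K; cases M) (simp add: qdefs Let_def algebra_simps)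
lemma sq_cd: "let r = ad (mu (3,0) (mu M (mu (qB K) (qU K)))) (mu (ad (mu (4,0) K) (3,0)) (0,1)) in mu r r = ad (mu (qc K M) (qd K M)) (qn K M)"
  by (cases K; cases M) (simp add: qdefs Let_def algebra_simps)

lemma mu_comm: "mu x y = mu y x"
  by (cases x; cases y) (simp add: mu_def zs_mult_def algebra_simps)

definition phi :: "zsqrt \<Rightarrow> real" where
  "phi z = real_of_int (fst z) + real_of_int (snd z) * sqrt 10"

lemma s10: "sqrt 10 * sqrt 10 = (10::real)" by simp

lemma ring4: "((a::real) + b * s) * (c + d * s) = a*c + (a*d + b*c)*s + b*d*(s*s)"
  by (simp add: algebra_simps)

lemma phi_mu: "phi (mu x y) = phi x * phi y"
  unfolding phi_def mu_def zs_mult_def ring4 s10 by (simp add: algebra_simps)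

lemma phi_ad: "phi (ad x y) = phi x + phi y"
  by (simp add: phi_def ad_def zs_add_def algebra_simps)

lemma phi_pair: "phi (a, b) = real_of_int a + real_of_int b * sqrt 10"
  by (simp add: phi_def)

lemma descent: "(p::int)^2 = 10 * q^2 \<Longrightarrow> q = 0"
proof (induction "nat \<bar>q\<bar>" arbitrary: p q rule: less_induct)
  case less
  show ?case
  proof (rule ccontr)
    assume q0: "q \<noteq> 0"
    have "even (p^2)" using less.prems by simp
    then have "even p" by simp
    then obtain a where a: "p = 2*a" by blast
    then have "2*a^2 = 5*q^2" using less.prems by (simp add: power2_eq_square)
    then have "even (5*q^2)" by (metis dvd_triv_left)
    then have "even q" by simp
    then obtain b where b: "q = 2*b" by blast
    have "a^2 = 10*b^2" using \<open>2*a^2 = 5*q^2\<close> b by (simp add: power2_eq_square)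
    moreover have "nat \<bar>b\<bar> < nat \<bar>q\<bar>" using b q0 by auto
    ultimately have "b = 0" using less.hyps by blast
    then show False using b q0 by simp
  qed
qed

lemma phi_zero: assumes "phi (p, q) = 0" shows "p = 0 \<and> q = 0"
proof -
  have e: "real_of_int p = - real_of_int q * sqrt 10" using assms by (simp add: phi_def)
  then have "(real_of_int p)^2 = (real_of_int q)^2 * (sqrt 10 * sqrt 10)"
    by (simp add: power2_eq_square algebra_simps)
  then have "(real_of_int p)^2 = (real_of_int q)^2 * 10" by (simp only: s10)
  then have "real_of_int (p^2) = real_of_int (10 * q^2)" by simp
  then have "p^2 = 10*q^2" by (simp only: of_int_eq_iff)
  then have "q = 0" by (rule descent)
  then show ?thesis using e by simp
qed

lemma phi_inj: assumes "phi x = phi y" shows "x = y"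
proof -
  have "phi (fst x - fst y, snd x - snd y) = 0" using assms by (simp add: phi_def algebra_simps)
  then show ?thesis using phi_zero by (metis eq_iff_diff_eq_0 prod_eq_iff)
qed

lemma quad_ev:
  fixes L B C :: real
  assumes "L \<noteq> 0" shows "\<exists>T. \<forall>t\<ge>T. L*t^2 + B*t + C \<noteq> 0"
proof (intro exI allI impI)
  fix t :: real assume t: "(\<bar>B\<bar> + \<bar>C\<bar> + 1) / \<bar>L\<bar> + 1 \<le> t"
  have L: "\<bar>L\<bar> > 0" using assms by simp
  have q: "(\<bar>B\<bar> + \<bar>C\<bar> + 1) / \<bar>L\<bar> \<ge> 0" using L by simp
  have t1: "t \<ge> 1" using t q by linarith
  have "(\<bar>B\<bar> + \<bar>C\<bar> + 1) / \<bar>L\<bar> < t" using t by simp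
  then have h: "\<bar>B\<bar> + \<bar>C\<bar> + 1 < \<bar>L\<bar> * t" using L by (simp add: divide_less_eq mult.commute)
  have c: "\<bar>C\<bar> \<le> \<bar>C\<bar> * t" using t1 mult_left_mono[of 1 t "\<bar>C\<bar>"] by simp
  have "\<bar>B*t + C\<bar> \<le> \<bar>B\<bar> * t + \<bar>C\<bar>" using t1 by (simp add: abs_mult abs_triangle_ineq[THEN order_trans])
  also have "\<dots> \<le> (\<bar>B\<bar> + \<bar>C\<bar>) * t" using c by (simp add: algebra_simps)
  also have "\<dots> < \<bar>L\<bar> * t * t" using h t1 by (intro mult_strict_right_mono) auto
  also have "\<dots> = \<bar>L*t^2\<bar>" using t1 by (simp add: abs_mult power2_eq_square)
  finally show "L*t^2 + B*t + C \<noteq> 0" by linarith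
qed

lemma phis:
  fixes K M :: zsqrt
  assumes t: "t = 2*phi K + 1" and nn: "nn = phi M * t"
  shows "4*t*phi (qa K M) = 4*nn"
    "4*t*phi (qb K M) = (9*nn+4*sqrt 10)*t^2 - (6*nn+4*sqrt 10)*t + nn"
    "4*t*phi (qc K M) = (9*nn+4*sqrt 10)*t^2 + (6*nn+4*sqrt 10)*t + nn"
    "4*t*phi (qd K M) = 4*(9*nn+4*sqrt 10)*t^2"
    "phi (qn K M) = 10 + 2*sqrt 10*nn"
  unfolding nn t qa_def qb_def qc_def qd_def qn_def qA_def qB_def qU_def phi_ad phi_mu phi_pair
  by (simp_all add: algebra_simps power2_eq_square)

fun Ks :: "nat \<Rightarrow> zsqrt" where
  "Ks 0 = (0,0)" | "Ks (Suc j) = ad (mu (19,6) (Ks j)) (9,3)"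
fun Vs :: "nat \<Rightarrow> zsqrt" where
  "Vs 0 = (1,0)" | "Vs (Suc j) = mu (19,-6) (Vs j)"

lemma phi_Ks: "2*phi (Ks j) + 1 = (19 + 6*sqrt 10)^j"
proof (induction j)
  case 0 then show ?case by (simp add: phi_pair)
next
  case (Suc j)
  have "2*phi (Ks (Suc j)) + 1 = (19 + 6*sqrt 10) * (2*phi (Ks j) + 1)"
    by (simp add: phi_ad phi_mu phi_pair algebra_simps)
  then show ?case using Suc by simp
qed
lemma phi_Vs: "phi (Vs j) = (19 - 6*sqrt 10)^j"
  by (induction j) (simp_all add: phi_mu phi_pair)
lemma rr: "(19 + 6*sqrt 10) * (19 - 6*sqrt 10) = (1::real)"
  by (simp add: algebra_simps)

lemma sqr: "mu r r = ad (mu x y) n \<Longrightarrow> zs_is_square 10 (zs_add (zs_mult 10 x y) n) \<and> zs_is_square 10 (zs_add (zs_mult 10 y x) n)"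
  unfolding zs_is_square_def by (metis mu_def ad_def mu_comm)

lemma quad_ok:
  assumes "qa K M \<noteq> qb K M" "qa K M \<noteq> qc K M" "qa K M \<noteq> qd K M"
    "qb K M \<noteq> qc K M" "qb K M \<noteq> qd K M" "qc K M \<noteq> qd K M"
    "qa K M \<noteq> (0,0)" "qb K M \<noteq> (0,0)" "qc K M \<noteq> (0,0)" "qd K M \<noteq> (0,0)"
  shows "is_Dn_quadruple 10 (qn K M) {qa K M, qb K M, qc K M, qd K M}"
proof -
  note s1 = sqr[OF sq_ab] and s2 = sqr[OF sq_ac] and s3 = sqr[OF sq_ad] and s4 = sqr[OF sq_bc]
  note s5 = sqr[OF sq_bd[unfolded Let_def]] and s6 = sqr[OF sq_cd[unfolded Let_def]]
  show ?thesis unfolding is_Dn_quadruple_def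
    using assms s1 s2 s3 s4 s5 s6 by auto
qed

lemma mainlem:
  fixes N :: zsqrt
  assumes N0: "N \<noteq> (0,0)"
  shows "infinite {S. is_Dn_quadruple 10 (10 + 20 * snd N, 2 * fst N) S}"
proof -
  define s :: real where "s = sqrt 10"
  define r :: real where "r = 19 + 6*s"
  define nn where "nn = phi N"
  define L where "L = 9*nn + 4*s"
  define P where "P = 6*nn + 4*s"
  define M where "M j = mu N (Vs j)" for j
  define t where "t j = r^j" for j
  have r1: "r > 1" unfolding r_def s_def using real_sqrt_ge_zero[of 10] by linarith
  have tpos: "t j > 0" for j unfolding t_def using r1 by simp
  have tK: "t j = 2*phi (Ks j) + 1" for j using phi_Ks[of j] unfolding t_def r_def s_def by simp
  have nnM: "nn = phi (M j) * t j" for j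
  proof -
    have "phi (M j) * t j = nn * ((19 - 6*s)^j * r^j)" unfolding M_def t_def nn_def
      by (simp add: phi_mu phi_Vs s_def)
    also have "(19 - 6*s)^j * r^j = 1" unfolding r_def s_def
      by (metis power_mult_distrib rr mult.commute power_one)
    finally show ?thesis by simp
  qed
  note ph = phis[OF tK nnM, folded s_def, folded L_def P_def]
  have nn0: "nn \<noteq> 0" using N0 phi_zero unfolding nn_def by (metis prod.collapse)
  have L0: "L \<noteq> 0"
  proof
    assume "L = 0"
    then have "phi (9 * fst N, 9 * snd N + 4) = 0" unfolding L_def nn_def s_def phi_def
      by (simp add: algebra_simps)
    then have "9 * snd N + 4 = 0" using phi_zero by blast
    then show False by presburger
  qed
  have P0: "3*nn + 2*s \<noteq> 0"
  proof
    assume "3*nn + 2*s = 0"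
    then have "phi (3 * fst N, 3 * snd N + 2) = 0" unfolding nn_def s_def phi_def
      by (simp add: algebra_simps)
    then have "3 * snd N + 2 = 0" using phi_zero by blast
    then show False by presburger
  qed
  obtain T1 where T1: "\<forall>x\<ge>T1. L*x^2 + (-P)*x + nn \<noteq> 0" using quad_ev[OF L0] by blast
  obtain T2 where T2: "\<forall>x\<ge>T2. L*x^2 + P*x + nn \<noteq> 0" using quad_ev[OF L0] by blast
  obtain T3 where T3: "\<forall>x\<ge>T3. L*x^2 + (-P)*x + (-3*nn) \<noteq> 0" using quad_ev[OF L0] by blast
  obtain T4 where T4: "\<forall>x\<ge>T4. L*x^2 + P*x + (-3*nn) \<noteq> 0" using quad_ev[OF L0] by blast
  obtain T5 where T5: "\<forall>x\<ge>T5. (4*L)*x^2 + 0*x + (-4*nn) \<noteq> 0" using quad_ev[of "4*L" 0 "-4*nn"] L0 by (auto simp del: mult_zero_left)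
  obtain T6 where T6: "\<forall>x\<ge>T6. (3*L)*x^2 + P*x + (-nn) \<noteq> 0" using quad_ev[of "3*L" P "-nn"] L0 by auto
  obtain T7 where T7: "\<forall>x\<ge>T7. (3*L)*x^2 + (-P)*x + (-nn) \<noteq> 0" using quad_ev[of "3*L" "-P" "-nn"] L0 by auto
  obtain J where J: "max T1 (max T2 (max T3 (max T4 (max T5 (max T6 T7))))) < r^J"
    using real_arch_pow[OF r1] by blast
  define Q where "Q j = {qa (Ks j) (M j), qb (Ks j) (M j), qc (Ks j) (M j), qd (Ks j) (M j)}" for j
  have good: "is_Dn_quadruple 10 (10 + 20 * snd N, 2 * fst N) (Q j)" if j: "j \<ge> J" for j
  proof -
    have "r^J \<le> r^j" using j r1 by (simp add: power_increasing)
    then have tj: "t j > T1" "t j > T2" "t j > T3" "t j > T4" "t j > T5" "t j > T6" "t j > T7"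
      using J unfolding t_def by auto
    let ?x = "t j"
    have e1: "L*?x^2 + (-P)*?x + nn \<noteq> 0" using T1 tj by auto
    have e2: "L*?x^2 + P*?x + nn \<noteq> 0" using T2 tj by auto
    have e3: "L*?x^2 + (-P)*?x + (-3*nn) \<noteq> 0" using T3 tj by auto
    have e4: "L*?x^2 + P*?x + (-3*nn) \<noteq> 0" using T4 tj by auto
    have e5: "(4*L)*?x^2 + 0*?x + (-4*nn) \<noteq> 0" using T5 tj by auto
    have e6: "(3*L)*?x^2 + P*?x + (-nn) \<noteq> 0" using T6 tj by auto
    have e7: "(3*L)*?x^2 + (-P)*?x + (-nn) \<noteq> 0" using T7 tj by auto
    have tp: "?x > 0" by (rule tpos)
    have cb: "P * ?x \<noteq> 0" using P0 tp unfolding P_def by auto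
    have Lx: "L * ?x^2 \<noteq> 0" using L0 tp by auto
    have ne: "phi x \<noteq> phi y \<Longrightarrow> x \<noteq> y" for x y by auto
    have nz: "phi x \<noteq> 0 \<Longrightarrow> x \<noteq> (0,0)" for x by (auto simp: phi_def)
    have d4: "4*?x*u \<noteq> 4*?x*v \<Longrightarrow> u \<noteq> v" for u v by auto
    have z4: "4*?x*u \<noteq> 0 \<Longrightarrow> u \<noteq> 0" for u by auto
    let ?K = "Ks j" and ?M = "M j"
    have "qa ?K ?M \<noteq> qb ?K ?M" apply (rule ne, rule d4) unfolding ph using e3 by (simp add: algebra_simps)
    moreover have "qa ?K ?M \<noteq> qc ?K ?M" apply (rule ne, rule d4) unfolding ph using e4 by (simp add: algebra_simps)
    moreover have "qa ?K ?M \<noteq> qd ?K ?M" apply (rule ne, rule d4) unfolding ph using e5 by (simp add: algebra_simps)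
    moreover have "qb ?K ?M \<noteq> qc ?K ?M" apply (rule ne, rule d4) unfolding ph using cb by (simp add: algebra_simps)
    moreover have "qb ?K ?M \<noteq> qd ?K ?M" apply (rule ne, rule d4) unfolding ph using e6 by (simp add: algebra_simps)
    moreover have "qc ?K ?M \<noteq> qd ?K ?M" apply (rule ne, rule d4) unfolding ph using e7 by (simp add: algebra_simps)
    moreover have "qa ?K ?M \<noteq> (0,0)" apply (rule nz, rule z4) unfolding ph using nn0 by simp
    moreover have "qb ?K ?M \<noteq> (0,0)" apply (rule nz, rule z4) unfolding ph using e1 by (simp add: algebra_simps)
    moreover have "qc ?K ?M \<noteq> (0,0)" apply (rule nz, rule z4) unfolding ph using e2 by (simp add: algebra_simps)
    moreover have "qd ?K ?M \<noteq> (0,0)" apply (rule nz, rule z4) unfolding ph using Lx by (simp add: algebra_simps)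
    ultimately have "is_Dn_quadruple 10 (qn ?K ?M) (Q j)" unfolding Q_def by (rule quad_ok)
    moreover have "qn ?K ?M = (10 + 20 * snd N, 2 * fst N)"
    proof (rule phi_inj)
      have "phi (qn ?K ?M) = 10 + 2*s*nn" by (rule ph(5))
      also have "\<dots> = phi (10 + 20 * snd N, 2 * fst N)"
        unfolding nn_def s_def phi_def by (simp add: algebra_simps)
      finally show "phi (qn ?K ?M) = phi (10 + 20 * snd N, 2 * fst N)" .
    qed
    ultimately show ?thesis by simp
  qed
  have dinj: "inj_on (\<lambda>j. qd (Ks j) (M j)) {J..}"
  proof (rule inj_onI)
    fix i j assume "qd (Ks i) (M i) = qd (Ks j) (M j)"
    moreover have pd: "phi (qd (Ks x) (M x)) = L * t x" for x
    proof -
      have "4 * t x * phi (qd (Ks x) (M x)) = 4 * t x * (L * t x)" using ph(4)[of x] by (simp add: power2_eq_square algebra_simps)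
      then show ?thesis using tpos[of x] by simp
    qed
    ultimately have "L * t i = L * t j" by metis
    then have "t i = t j" using L0 tpos[of i] tpos[of j] by auto
    then show "i = j" unfolding t_def using r1 by (simp add: power_inject_exp)
  qed
  show ?thesis
  proof
    assume fin: "finite {S. is_Dn_quadruple 10 (10 + 20 * snd N, 2 * fst N) S}"
    have "(\<lambda>j. qd (Ks j) (M j)) ` {J..} \<subseteq> \<Union> {S. is_Dn_quadruple 10 (10 + 20 * snd N, 2 * fst N) S}"
      using good unfolding Q_def by fastforce
    moreover have "finite (\<Union> {S. is_Dn_quadruple 10 (10 + 20 * snd N, 2 * fst N) S})"
      using fin proof (rule finite_Union)
      fix S assume "S \<in> {S. is_Dn_quadruple 10 (10 + 20 * snd N, 2 * fst N) S}"
      then have "card S = 4" by (simp add: is_Dn_quadruple_def)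
      then show "finite S" by (intro card_ge_0_finite) simp
    qed
    ultimately have "finite ((\<lambda>j. qd (Ks j) (M j)) ` {J..})" by (rule finite_subset)
    then have "finite {J..}" using dinj finite_imageD by blast
    then show False by (simp add: infinite_Ici)
  qed
qed

theorem mainTheorem5:
  shows "(\<forall>m k :: int. m mod 5 = 4 \<and> k mod 5 = 2 \<longrightarrow>
            infinite {S. is_Dn_quadruple 10 (4 * (12 * m + 9) + 2, 4 * (6 * k + 3)) S})
       \<and> (\<forall>m k :: int. m mod 5 = 1 \<and> k mod 5 = 0 \<longrightarrow>
            infinite {S. is_Dn_quadruple 10 (48 * m + 2, 24 * k) S})"
proof (intro conjI allI impI)
  fix m k :: int assume h: "m mod 5 = 4 \<and> k mod 5 = 2"
  define q where "q = 12*(m div 5) + 11"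
  have q: "12*m + 7 = 5*q" using h unfolding q_def by presburger
  have "12*k+6 \<noteq> 0" by presburger
  then have N0: "(12*k+6, q) \<noteq> (0,0)" by simp
  have "(10 + 20 * snd (12*k+6, q), 2 * fst (12*k+6, q)) = (4 * (12 * m + 9) + 2, 4 * (6 * k + 3))"
    using q by simp
  note e = this
  show "infinite {S. is_Dn_quadruple 10 (4 * (12 * m + 9) + 2, 4 * (6 * k + 3)) S}"
    using mainlem[OF N0] unfolding e .
next
  fix m k :: int assume h: "m mod 5 = 1 \<and> k mod 5 = 0"
  define q where "q = 12*(m div 5) + 2"
  have q: "12*m - 2 = 5*q" using h unfolding q_def by presburger
  have "q \<noteq> 0" using q by presburger
  then have N0: "(12*k, q) \<noteq> (0,0)" by simp
  have "(10 + 20 * snd (12*k, q), 2 * fst (12*k, q)) = (48 * m + 2, 24 * k)"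
    using q by simp
  note e = this
  show "infinite {S. is_Dn_quadruple 10 (48 * m + 2, 24 * k) S}"
    using mainlem[OF N0] unfolding e .
qed
end
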